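(* Let $K:[0,\infty)\to(0,\infty)$ be non-increasing with $K(0)=1$, and for $\sigma>0$ let $K_\sigma(x)=K(x/\sigma)$. Let $\mathcal{X}=\{\mathbf{x}_1,\dots,\mathbf{x}_n\}\subset\mathbb{R}^d$ and let $\mathcal{C}_1,\dots,\mathcal{C}_k$ be a partition of $\mathcal{X}$ into nonempty sets. For each $l\in[k]$, suppose $\mathcal{C}_l$ is connected at distance $\delta_l$. Let $\mathbf{U}\in\mathbb{R}^{n\times n}$ have as columns the eigenvectors of the unnormalised Laplacian $\mathbf{L}$ of the graph $\mathcal{G}=(\mathcal{X},K_\sigma)$. Then for each $i,j\in[n]$, $l\in[k]$ with $\mathbf{x}_i,\mathbf{x}_j\in\mathcal{C}_l$, $$\|\mathbf{U}_{i,1:k}-\mathbf{U}_{j,1:k}\|\le \max_{m\in[k]} n^{1.5}k^{0.5}\sqrt{\frac{K_\sigma(d(\mathcal{C}_m,\mathcal{X}\setminus\mathcal{C}_m))}{K_\sigma(\delta_l)}}.$$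
   Context: $[n]=\{1,\dots,n\}$; $\|\cdot\|$ is the Euclidean norm and $d(\mathbf{x},\mathbf{y})=\|\mathbf{x}-\mathbf{y}\|$. For sets $S,U\subset\mathbb{R}^d$, $d(S,U)=\inf_{\mathbf{x}\in S,\mathbf{y}\in U}d(\mathbf{x},\mathbf{y})$, with the convention $d(S,\emptyset)=\infty$. A set $S\subset\mathbb{R}^d$ is connected at distance $\delta$ if there is no partition of $S$ into $S_1,S_2$ with $d(S_1,S_2)>\delta$. The graph $\mathcal{G}=(\mathcal{X},K_\sigma)$ has affinity matrix $\mathbf{A}_{ij}=K_\sigma(\|\mathbf{x}_i-\mathbf{x}_j\|)$ (including $i=j$), degree matrix $\mathbf{D}$ diagonal with $\mathbf{D}_{ii}=\sum_j\mathbf{A}_{ij}$, and unnormalised Laplacian $\mathbf{L}=\mathbf{D}-\mathbf{A}$. "The eigenvectors" means an orthonormal eigenbasis arranged as columns so that the corresponding eigenvalues are in nondecreasing order. $\mathbf{U}_{i,1:k}$ denotes the first $k$ entries of row $i$. *)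

theory Defs
  imports "HOL-Analysis.Analysis"
begin

text \<open>Points x_0..x_{n-1} (0-based) in R^d, matrices as nat => nat => real with indices < n.\<close>

definition Ksig :: "(real \<Rightarrow> real) \<Rightarrow> real \<Rightarrow> real \<Rightarrow> real" where
  "Ksig K \<sigma> t = K (t / \<sigma>)"

text \<open>K_sigma evaluated at the set distance d(S,T), with d(S,{}) = infinity and
  K_sigma(infinity) read as the limit value inf_{t>=0} K t.\<close>
definition Ksig_setdist :: "(real \<Rightarrow> real) \<Rightarrow> real \<Rightarrow> 'a::metric_space set \<Rightarrow> 'a set \<Rightarrow> real" where
  "Ksig_setdist K \<sigma> S T = (if T = {} then (INF t\<in>{0..}. K t) else Ksig K \<sigma> (setdist S T))"

definition connected_at_dist :: "'a::metric_space set \<Rightarrow> real \<Rightarrow> bool" where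
  "connected_at_dist S \<delta> \<longleftrightarrow>
     \<not> (\<exists>S1 S2. S1 \<noteq> {} \<and> S2 \<noteq> {} \<and> S1 \<union> S2 = S \<and> S1 \<inter> S2 = {} \<and> setdist S1 S2 > \<delta>)"

definition affinity :: "(real \<Rightarrow> real) \<Rightarrow> real \<Rightarrow> (nat \<Rightarrow> 'a::metric_space) \<Rightarrow> nat \<Rightarrow> nat \<Rightarrow> real" where
  "affinity K \<sigma> x i j = Ksig K \<sigma> (dist (x i) (x j))"

definition degree_mat :: "(real \<Rightarrow> real) \<Rightarrow> real \<Rightarrow> (nat \<Rightarrow> 'a::metric_space) \<Rightarrow> nat \<Rightarrow> nat \<Rightarrow> nat \<Rightarrow> real" where
  "degree_mat K \<sigma> x n i j = (if i = j then (\<Sum>l<n. affinity K \<sigma> x i l) else 0)"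

definition laplacian :: "(real \<Rightarrow> real) \<Rightarrow> real \<Rightarrow> (nat \<Rightarrow> 'a::metric_space) \<Rightarrow> nat \<Rightarrow> nat \<Rightarrow> nat \<Rightarrow> real" where
  "laplacian K \<sigma> x n i j = degree_mat K \<sigma> x n i j - affinity K \<sigma> x i j"

definition sorted_eigenbasis :: "nat \<Rightarrow> (nat \<Rightarrow> nat \<Rightarrow> real) \<Rightarrow> (nat \<Rightarrow> nat \<Rightarrow> real) \<Rightarrow> bool" where
  "sorted_eigenbasis n M U \<longleftrightarrow>
     (\<forall>a<n. \<forall>b<n. (\<Sum>i<n. U i a * U i b) = (if a = b then 1 else 0)) \<and>
     (\<exists>lam :: nat \<Rightarrow> real.
        (\<forall>a b. a \<le> b \<longrightarrow> b < n \<longrightarrow> lam a \<le> lam b) \<and>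
        (\<forall>a<n. \<forall>i<n. (\<Sum>j<n. M i j * U j a) = lam a * U i a))"

definition is_partition :: "'a set \<Rightarrow> (nat \<Rightarrow> 'a set) \<Rightarrow> nat \<Rightarrow> bool" where
  "is_partition X C k \<longleftrightarrow>
     (\<forall>l<k. C l \<noteq> {}) \<and> (\<Union>l<k. C l) = X \<and> (\<forall>l<k. \<forall>m<k. l \<noteq> m \<longrightarrow> C l \<inter> C m = {})"

definition row_dist :: "(nat \<Rightarrow> nat \<Rightarrow> real) \<Rightarrow> nat \<Rightarrow> nat \<Rightarrow> nat \<Rightarrow> real" where
  "row_dist U k i j = sqrt (\<Sum>a<k. (U i a - U j a)\<^sup>2)"

end

theory Submission imports Defs "Jordan_Normal_Form.Determinant" begin

lemma complete_rows:
  fixes U :: "nat \<Rightarrow> nat \<Rightarrow> real"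
  assumes orth: "\<forall>a<n. \<forall>b<n. (\<Sum>i<n. U i a * U i b) = (if a = b then 1 else 0)"
    and "i < n" "j < n"
  shows "(\<Sum>a<n. U i a * U j a) = (if i = j then 1 else 0)"
proof -
  define A :: "real mat" where "A = mat n n (\<lambda>(a,b). U b a)"
  define B :: "real mat" where "B = mat n n (\<lambda>(a,b). U a b)"
  have Ac: "A \<in> carrier_mat n n" and Bc: "B \<in> carrier_mat n n" by (auto simp: A_def B_def)
  have "A * B = 1\<^sub>m n"
  proof (rule eq_matI)
    fix a b assume ab: "a < dim_row (1\<^sub>m n)" "b < dim_col (1\<^sub>m n)"
    then have "(A * B) $$ (a, b) = (\<Sum>i<n. U i a * U i b)"
      by (simp add: A_def B_def scalar_prod_def lessThan_atLeast0)
    also have "\<dots> = 1\<^sub>m n $$ (a, b)" using orth ab by simp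
    finally show "(A * B) $$ (a, b) = 1\<^sub>m n $$ (a, b)" .
  qed (auto simp: A_def B_def)
  then have BA: "B * A = 1\<^sub>m n" using mat_mult_left_right_inverse[OF Ac Bc] by blast
  have "(\<Sum>a<n. U i a * U j a) = (B * A) $$ (i, j)"
    using assms by (simp add: A_def B_def scalar_prod_def lessThan_atLeast0)
  also have "\<dots> = (if i = j then 1 else 0)" using BA assms by simp
  finally show ?thesis .
qed

lemma sum_sq_diff:
  fixes f :: "'a \<Rightarrow> real"
  assumes "finite A"
  shows "(\<Sum>x\<in>A. \<Sum>y\<in>A. (f x - f y)\<^sup>2) = 2 * real (card A) * (\<Sum>x\<in>A. (f x)\<^sup>2) - 2 * (\<Sum>x\<in>A. f x)\<^sup>2"
proof -
  define S where "S = (\<Sum>x\<in>A. f x)"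
  define S2 where "S2 = (\<Sum>x\<in>A. (f x)\<^sup>2)"
  have "(\<Sum>x\<in>A. \<Sum>y\<in>A. (f x - f y)\<^sup>2) = (\<Sum>x\<in>A. real (card A) * (f x)\<^sup>2 + S2 - 2 * f x * S)"
  proof (rule sum.cong[OF refl])
    fix x assume "x \<in> A"
    have "(\<Sum>y\<in>A. (f x - f y)\<^sup>2) = (\<Sum>y\<in>A. (f x)\<^sup>2 + (f y)\<^sup>2 - 2 * f x * f y)"
      by (simp add: power2_diff)
    also have "\<dots> = real (card A) * (f x)\<^sup>2 + S2 - 2 * f x * S"
      by (simp add: sum.distrib sum_subtractf sum_distrib_left S_def S2_def)
    finally show "(\<Sum>y\<in>A. (f x - f y)\<^sup>2) = real (card A) * (f x)\<^sup>2 + S2 - 2 * f x * S" .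
  qed
  also have "\<dots> = 2 * real (card A) * S2 - 2 * S * S"
  proof -
    have e1: "(\<Sum>x\<in>A. 2 * f x * S) = 2 * S * (\<Sum>x\<in>A. f x)"
      by (simp add: sum_distrib_left sum_distrib_right mult_ac)
    have e2: "(\<Sum>x\<in>A. real (card A) * (f x)\<^sup>2) = real (card A) * S2"
      by (simp add: sum_distrib_left S2_def)
    show ?thesis using assms
      by (simp add: sum.distrib sum_subtractf e1 e2 flip: S_def)
  qed
  finally show ?thesis by (simp add: S_def S2_def power2_eq_square)
qed

lemma cs_sum:
  fixes f :: "'a \<Rightarrow> real"
  assumes "finite A"
  shows "(\<Sum>x\<in>A. f x)\<^sup>2 \<le> real (card A) * (\<Sum>x\<in>A. (f x)\<^sup>2)"
proof -
  have "0 \<le> (\<Sum>x\<in>A. \<Sum>y\<in>A. (f x - f y)\<^sup>2)" by (intro sum_nonneg) auto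
  then show ?thesis unfolding sum_sq_diff[OF assms] by simp
qed

lemma quad_form:
  fixes w :: "nat \<Rightarrow> nat \<Rightarrow> real"
  assumes sym: "\<forall>p q. w p q = w q p"
  shows "(\<Sum>i<n. v i * (\<Sum>j<n. ((if i = j then (\<Sum>l<n. w i l) else 0) - w i j) * v j))
        = (1/2) * (\<Sum>p<n. \<Sum>q<n. w p q * (v p - v q)\<^sup>2)"
proof -
  have l1: "(\<Sum>j<n. ((if i = j then (\<Sum>l<n. w i l) else 0) - w i j) * v j)
        = (\<Sum>l<n. w i l) * v i - (\<Sum>j<n. w i j * v j)" if "i < n" for i
    using that by (simp add: sum_subtractf left_diff_distrib if_distrib[of "\<lambda>x. x * _"] cong: if_cong)
  have "(\<Sum>i<n. v i * (\<Sum>j<n. ((if i = j then (\<Sum>l<n. w i l) else 0) - w i j) * v j))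
       = (\<Sum>i<n. v i * ((\<Sum>l<n. w i l) * v i - (\<Sum>j<n. w i j * v j)))"
    using l1 by (intro sum.cong) auto
  also have "\<dots> = (\<Sum>i<n. \<Sum>j<n. w i j * (v i)\<^sup>2) - (\<Sum>i<n. \<Sum>j<n. w i j * v i * v j)"
    by (simp add: right_diff_distrib sum_subtractf sum_distrib_left sum_distrib_right
        power2_eq_square mult_ac)
  finally have A: "(\<Sum>i<n. v i * (\<Sum>j<n. ((if i = j then (\<Sum>l<n. w i l) else 0) - w i j) * v j))
       = (\<Sum>i<n. \<Sum>j<n. w i j * (v i)\<^sup>2) - (\<Sum>i<n. \<Sum>j<n. w i j * v i * v j)" .
  moreover have "(\<Sum>p<n. \<Sum>q<n. w p q * (v p - v q)\<^sup>2)
      = (\<Sum>p<n. \<Sum>q<n. w p q * (v p)\<^sup>2) + (\<Sum>p<n. \<Sum>q<n. w p q * (v q)\<^sup>2)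
        - 2 * (\<Sum>i<n. \<Sum>j<n. w i j * v i * v j)"
    by (simp add: power2_diff algebra_simps sum.distrib sum_subtractf sum_distrib_left)
  moreover have "(\<Sum>p<n. \<Sum>q<n. w p q * (v q)\<^sup>2) = (\<Sum>p<n. \<Sum>q<n. w p q * (v p)\<^sup>2)"
    by (subst sum.swap) (simp add: sym)
  ultimately show ?thesis by simp
qed

lemma spectral:
  fixes U M :: "nat \<Rightarrow> nat \<Rightarrow> real"
  assumes comp: "\<forall>i<n. \<forall>j<n. (\<Sum>a<n. U i a * U j a) = (if i = j then 1 else 0)"
    and eig: "\<forall>a<n. \<forall>i<n. (\<Sum>j<n. M i j * U j a) = lam a * U i a"
    and sym: "\<forall>i<n. \<forall>j<n. M i j = M j i"
  shows "(\<Sum>i<n. v i * (\<Sum>j<n. M i j * v j)) = (\<Sum>a<n. lam a * (\<Sum>i<n. U i a * v i)\<^sup>2)"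
proof -
  define c where "c a = (\<Sum>i<n. U i a * v i)" for a
  have vexp: "v i = (\<Sum>a<n. c a * U i a)" if "i < n" for i
  proof -
    have "(\<Sum>a<n. c a * U i a) = (\<Sum>a<n. \<Sum>j<n. v j * (U i a * U j a))"
      unfolding c_def sum_distrib_right by (simp add: mult_ac)
    also have "\<dots> = (\<Sum>j<n. \<Sum>a<n. v j * (U i a * U j a))" by (rule sum.swap)
    also have "\<dots> = (\<Sum>j<n. v j * (\<Sum>a<n. U i a * U j a))" by (simp add: sum_distrib_left)
    also have "\<dots> = (\<Sum>j<n. (if i = j then v j else 0))"
      using comp that by (intro sum.cong) auto
    also have "\<dots> = v i" using that by simp
    finally show ?thesis by simp
  qed
  have Mc: "(\<Sum>i<n. U i a * (\<Sum>j<n. M i j * v j)) = lam a * c a" if "a < n" for a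
  proof -
    have "(\<Sum>i<n. U i a * (\<Sum>j<n. M i j * v j)) = (\<Sum>i<n. \<Sum>j<n. v j * (M j i * U i a))"
      using sym by (intro sum.cong) (auto simp: sum_distrib_left mult_ac)
    also have "\<dots> = (\<Sum>j<n. \<Sum>i<n. v j * (M j i * U i a))" by (rule sum.swap)
    also have "\<dots> = (\<Sum>j<n. v j * (\<Sum>i<n. M j i * U i a))" by (simp add: sum_distrib_left)
    also have "\<dots> = (\<Sum>j<n. v j * (lam a * U j a))"
      using eig that by (intro sum.cong) auto
    also have "\<dots> = lam a * c a" unfolding c_def by (simp add: sum_distrib_left mult_ac)
    finally show ?thesis .
  qed
  have "(\<Sum>i<n. v i * (\<Sum>j<n. M i j * v j)) = (\<Sum>i<n. (\<Sum>a<n. c a * U i a) * (\<Sum>j<n. M i j * v j))"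
    using vexp by (intro sum.cong) auto
  also have "\<dots> = (\<Sum>i<n. \<Sum>a<n. c a * (U i a * (\<Sum>j<n. M i j * v j)))"
    by (simp add: sum_distrib_right mult_ac)
  also have "\<dots> = (\<Sum>a<n. \<Sum>i<n. c a * (U i a * (\<Sum>j<n. M i j * v j)))" by (rule sum.swap)
  also have "\<dots> = (\<Sum>a<n. c a * (\<Sum>i<n. U i a * (\<Sum>j<n. M i j * v j)))"
    by (simp add: sum_distrib_left)
  also have "\<dots> = (\<Sum>a<n. lam a * (c a)\<^sup>2)"
    using Mc by (intro sum.cong) (auto simp: power2_eq_square)
  finally show ?thesis unfolding c_def .
qed

lemma parseval:
  fixes U :: "nat \<Rightarrow> nat \<Rightarrow> real"
  assumes comp: "\<forall>i<n. \<forall>j<n. (\<Sum>a<n. U i a * U j a) = (if i = j then 1 else 0)"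
  shows "(\<Sum>a<n. (\<Sum>i<n. U i a * v i)\<^sup>2) = (\<Sum>i<n. (v i)\<^sup>2)"
proof -
  have "(\<Sum>i<n. v i * (\<Sum>j<n. (if i = j then 1 else 0) * v j)) = (\<Sum>a<n. 1 * (\<Sum>i<n. U i a * v i)\<^sup>2)"
  proof (rule spectral[OF comp])
    show "\<forall>a<n. \<forall>i<n. (\<Sum>j<n. (if i = j then 1 else 0) * U j a) = 1 * U i a"
    proof (intro allI impI)
      fix a i assume "a < n" "i < n"
      have "(\<Sum>j<n. (if i = j then 1 else 0) * U j a) = (\<Sum>j<n. if i = j then U j a else 0)"
        by (intro sum.cong) auto
      then show "(\<Sum>j<n. (if i = j then 1 else 0) * U j a) = 1 * U i a" using \<open>i < n\<close> by simp
    qed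
  qed auto
  moreover have "(\<Sum>i<n. v i * (\<Sum>j<n. (if i = j then 1 else 0) * v j)) = (\<Sum>i<n. (v i)\<^sup>2)"
  proof (intro sum.cong refl)
    fix i assume "i \<in> {..<n}"
    have "(\<Sum>j<n. (if i = j then 1 else 0) * v j) = (\<Sum>j<n. if i = j then v j else 0)"
      by (intro sum.cong) auto
    then show "v i * (\<Sum>j<n. (if i = j then 1 else 0) * v j) = (v i)\<^sup>2"
      using \<open>i \<in> {..<n}\<close> by (simp add: power2_eq_square)
  qed
  ultimately show ?thesis by simp
qed


lemma tree_step:
  fixes R :: "nat \<Rightarrow> nat \<Rightarrow> bool" and S :: "nat set"
  assumes fin: "finite S" and iS: "i \<in> S"
   and conn: "\<forall>A. i \<in> A \<longrightarrow> A \<subseteq> S \<longrightarrow> A \<noteq> S \<longrightarrow> (\<exists>p\<in>A. \<exists>q\<in>S-A. R p q)"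
  shows "s < card S \<Longrightarrow> \<exists>A E. i \<in> A \<and> A \<subseteq> S \<and> card A = s + 1 \<and> finite E \<and> card E \<le> s \<and>
     E \<subseteq> {(p,q). p \<in> A \<and> q \<in> A \<and> R p q} \<and> (\<forall>e\<in>E. prod.swap e \<notin> E) \<and>
     (\<forall>f::nat\<Rightarrow>real. \<forall>q\<in>A. \<bar>f q - f i\<bar> \<le> (\<Sum>e\<in>E. \<bar>f (fst e) - f (snd e)\<bar>))"
proof (induction s)
  case 0
  show ?case by (rule exI[of _ "{i}"], rule exI[of _ "{}"]) (use iS in auto)
next
  case (Suc s)
  then obtain A E where A: "i \<in> A" "A \<subseteq> S" "card A = s + 1" and E: "finite E" "card E \<le> s"
     "E \<subseteq> {(p,q). p \<in> A \<and> q \<in> A \<and> R p q}" "\<forall>e\<in>E. prod.swap e \<notin> E"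
     and bnd: "\<forall>f::nat\<Rightarrow>real. \<forall>q\<in>A. \<bar>f q - f i\<bar> \<le> (\<Sum>e\<in>E. \<bar>f (fst e) - f (snd e)\<bar>)"
    by auto
  have "A \<noteq> S" using A Suc.prems by auto
  then obtain p q where pq: "p \<in> A" "q \<in> S" "q \<notin> A" "R p q" using conn A by blast
  have finA: "finite A" using A fin finite_subset by blast
  have nE: "(p, q) \<notin> E" using E pq by auto
  show ?case
  proof (rule exI[of _ "insert q A"], rule exI[of _ "insert (p,q) E"], intro conjI)
    show "i \<in> insert q A" "insert q A \<subseteq> S" using A pq by auto
    show "card (insert q A) = Suc s + 1" using A pq finA by simp
    show "finite (insert (p, q) E)" using E by simp
    show "card (insert (p, q) E) \<le> Suc s" using E nE by simp
    show "insert (p, q) E \<subseteq> {(p', q'). p' \<in> insert q A \<and> q' \<in> insert q A \<and> R p' q'}"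
      using E pq by auto
    show "\<forall>e\<in>insert (p, q) E. prod.swap e \<notin> insert (p, q) E"
    proof
      fix e assume e: "e \<in> insert (p, q) E"
      have qE: "\<forall>e'\<in>E. fst e' \<noteq> q \<and> snd e' \<noteq> q" using E(3) pq(3) by auto
      show "prod.swap e \<notin> insert (p, q) E"
      proof (cases "e = (p, q)")
        case True
        then show ?thesis using qE pq by auto
      next
        case False
        then have "e \<in> E" using e by simp
        then show ?thesis using qE E(4) by (cases e) auto
      qed
    qed
    show "\<forall>f::nat\<Rightarrow>real. \<forall>q'\<in>insert q A. \<bar>f q' - f i\<bar> \<le> (\<Sum>e\<in>insert (p, q) E. \<bar>f (fst e) - f (snd e)\<bar>)"
    proof (intro allI ballI)
      fix f :: "nat \<Rightarrow> real" and q' assume q': "q' \<in> insert q A"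
      have sum_eq: "(\<Sum>e\<in>insert (p, q) E. \<bar>f (fst e) - f (snd e)\<bar>) = \<bar>f p - f q\<bar> + (\<Sum>e\<in>E. \<bar>f (fst e) - f (snd e)\<bar>)"
        using E nE by simp
      show "\<bar>f q' - f i\<bar> \<le> (\<Sum>e\<in>insert (p, q) E. \<bar>f (fst e) - f (snd e)\<bar>)"
      proof (cases "q' = q")
        case True
        have "\<bar>f p - f i\<bar> \<le> (\<Sum>e\<in>E. \<bar>f (fst e) - f (snd e)\<bar>)" using bnd pq by blast
        then show ?thesis unfolding sum_eq True by linarith
      next
        case False
        then have "\<bar>f q' - f i\<bar> \<le> (\<Sum>e\<in>E. \<bar>f (fst e) - f (snd e)\<bar>)" using bnd q' by blast
        then show ?thesis unfolding sum_eq by linarith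
      qed
    qed
  qed
qed

lemma tree:
  fixes R :: "nat \<Rightarrow> nat \<Rightarrow> bool" and S :: "nat set"
  assumes fin: "finite S" and iS: "i \<in> S"
   and conn: "\<forall>A. i \<in> A \<longrightarrow> A \<subseteq> S \<longrightarrow> A \<noteq> S \<longrightarrow> (\<exists>p\<in>A. \<exists>q\<in>S-A. R p q)"
  shows "\<exists>E. finite E \<and> card E < card S \<and> E \<subseteq> {(p,q). p \<in> S \<and> q \<in> S \<and> R p q} \<and> (\<forall>e\<in>E. prod.swap e \<notin> E) \<and>
     (\<forall>f::nat\<Rightarrow>real. \<forall>q\<in>S. \<bar>f q - f i\<bar> \<le> (\<Sum>e\<in>E. \<bar>f (fst e) - f (snd e)\<bar>))"
proof -
  have cS: "card S > 0" using fin iS card_gt_0_iff by blast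
  then obtain A E where A: "i \<in> A" "A \<subseteq> S" "card A = card S - 1 + 1" and E: "finite E" "card E \<le> card S - 1"
     "E \<subseteq> {(p,q). p \<in> A \<and> q \<in> A \<and> R p q}" "\<forall>e\<in>E. prod.swap e \<notin> E"
     and bnd: "\<forall>f::nat\<Rightarrow>real. \<forall>q\<in>A. \<bar>f q - f i\<bar> \<le> (\<Sum>e\<in>E. \<bar>f (fst e) - f (snd e)\<bar>)"
    using tree_step[OF fin iS conn, of "card S - 1"] by auto
  have "A = S" using A cS fin by (intro card_subset_eq) auto
  then show ?thesis using E bnd cS by (intro exI[of _ E]) auto
qed


lemma sum_if_subset:
  fixes n :: nat
  assumes "S \<subseteq> {..<n}"
  shows "(\<Sum>p<n. if p \<in> S then g p else 0) = (sum g S :: real)"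
proof -
  have e: "{..<n} \<inter> S = S" using assms by auto
  have "sum g ({..<n} \<inter> S) = (\<Sum>p<n. if p \<in> S then g p else 0)"
    by (rule sum.inter_restrict) simp
  then show ?thesis unfolding e by simp
qed

lemma pow15: "0 \<le> (x::real) \<Longrightarrow> x powr 1.5 = sqrt (x ^ 3)"
proof -
  assume x: "0 \<le> x"
  have "x powr 1.5 = x powr (3/2)" by simp
  also have "\<dots> = sqrt (x powr 3)" by (rule powr_half_sqrt_powr[OF x])
  also have "x powr 3 = x ^ 3" using x by (simp add: powr_numeral)
  finally show ?thesis .
qed

lemma pow05: "0 \<le> (x::real) \<Longrightarrow> x powr 0.5 = sqrt x"
  using powr_half_sqrt[of x] by simp


theorem lemma1:
  fixes K :: "real \<Rightarrow> real" and \<sigma> :: real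
    and x :: "nat \<Rightarrow> real ^ 'd" and n k :: nat
    and C :: "nat \<Rightarrow> (real ^ 'd) set" and \<delta> :: "nat \<Rightarrow> real"
    and U :: "nat \<Rightarrow> nat \<Rightarrow> real" and i j l :: nat
  assumes K_pos: "\<forall>t\<ge>0. K t > 0"
    and K_noninc: "\<forall>s t. 0 \<le> s \<longrightarrow> s \<le> t \<longrightarrow> K t \<le> K s"
    and K0: "K 0 = 1"
    and sigma: "\<sigma> > 0"
    and distinct_pts: "inj_on x {..<n}"
    and part: "is_partition (x ` {..<n}) C k"
    and delta_nonneg: "\<forall>m<k. \<delta> m \<ge> 0"
    and conn: "\<forall>m<k. connected_at_dist (C m) (\<delta> m)"
    and eig: "sorted_eigenbasis n (laplacian K \<sigma> x n) U"
    and ij: "i < n" "j < n" and lk: "l < k"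
    and mem: "x i \<in> C l" "x j \<in> C l"
  shows "row_dist U k i j \<le>
    Max ((\<lambda>m. real n powr 1.5 * real k powr 0.5 *
              sqrt (Ksig_setdist K \<sigma> (C m) (x ` {..<n} - C m) / Ksig K \<sigma> (\<delta> l))) ` {..<k})"
proof -
  define X where "X = x ` {..<n}"
  define w where "w p q = affinity K \<sigma> x p q" for p q
  define L where "L = laplacian K \<sigma> x n"
  define Q where "Q v = (\<Sum>i<n. v i * (\<Sum>j<n. L i j * v j))" for v :: "nat \<Rightarrow> real"
  define W where "W v = (1/2) * (\<Sum>p<n. \<Sum>q<n. w p q * (v p - v q)\<^sup>2)" for v :: "nat \<Rightarrow> real"
  have Ksig_mono: "Ksig K \<sigma> t \<le> Ksig K \<sigma> s" if "0 \<le> s" "s \<le> t" for s t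
    unfolding Ksig_def using K_noninc sigma that by (simp add: divide_right_mono)
  have Ksig_pos: "Ksig K \<sigma> t > 0" if "0 \<le> t" for t
    unfolding Ksig_def using K_pos sigma that by simp
  have w_sym: "\<forall>p q. w p q = w q p" by (simp add: w_def affinity_def dist_commute)
  have w_pos: "w p q > 0" for p q unfolding w_def affinity_def by (rule Ksig_pos) simp
  have L_eq: "L i j = (if i = j then (\<Sum>l<n. w i l) else 0) - w i j" for i j
    by (simp add: L_def laplacian_def degree_mat_def w_def)
  have QW: "Q v = W v" for v
    unfolding Q_def W_def L_eq by (rule quad_form[OF w_sym])
  have W_nonneg: "W v \<ge> 0" for v
    unfolding W_def using w_pos by (intro mult_nonneg_nonneg sum_nonneg) (auto intro: less_imp_le)
  have L_sym: "\<forall>i<n. \<forall>j<n. L i j = L j i" using w_sym by (simp add: L_eq)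
  from eig obtain lam where orth: "\<forall>a<n. \<forall>b<n. (\<Sum>i<n. U i a * U i b) = (if a = b then 1 else 0)"
    and lam_mono: "\<forall>a b. a \<le> b \<longrightarrow> b < n \<longrightarrow> lam a \<le> lam b"
    and eigL: "\<forall>a<n. \<forall>i<n. (\<Sum>j<n. L i j * U j a) = lam a * U i a"
    unfolding sorted_eigenbasis_def L_def by blast
  have comp: "\<forall>i<n. \<forall>j<n. (\<Sum>a<n. U i a * U j a) = (if i = j then 1 else 0)"
    using complete_rows[OF orth] by blast
  have Q_spec: "Q v = (\<Sum>a<n. lam a * (\<Sum>i<n. U i a * v i)\<^sup>2)" for v
    unfolding Q_def by (rule spectral[OF comp eigL L_sym])
  have lam_Q: "lam a = Q (\<lambda>p. U p a)" if "a < n" for a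
  proof -
    have "Q (\<lambda>p. U p a) = (\<Sum>i<n. U i a * (lam a * U i a))"
      unfolding Q_def using eigL that by (intro sum.cong) auto
    also have "\<dots> = lam a * (\<Sum>i<n. U i a * U i a)" by (simp add: sum_distrib_left mult_ac)
    also have "\<dots> = lam a" using orth that by simp
    finally show ?thesis by simp
  qed
  have lam_nonneg: "lam a \<ge> 0" if "a < n" for a
    using lam_Q[OF that] QW W_nonneg by simp
  have part_ne: "\<forall>m<k. C m \<noteq> {}" and part_un: "(\<Union>m<k. C m) = X"
    and part_disj: "\<forall>m<k. \<forall>m'<k. m \<noteq> m' \<longrightarrow> C m \<inter> C m' = {}"
    using part unfolding is_partition_def X_def by auto
  define S where "S m = {p. p < n \<and> x p \<in> C m}" for m
  have S_sub: "S m \<subseteq> {..<n}" for m by (auto simp: S_def)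
  have S_fin: "finite (S m)" for m using S_sub finite_subset by blast
  have S_ne: "S m \<noteq> {}" if mk: "m < k" for m
  proof -
    obtain y where "y \<in> C m" using part_ne mk by blast
    then have "y \<in> X" using part_un mk by blast
    then obtain p where "p < n" "y = x p" unfolding X_def by auto
    then show ?thesis using \<open>y \<in> C m\<close> by (auto simp: S_def)
  qed
  have S_disj: "m = m'" if "p \<in> S m" "p \<in> S m'" "m < k" "m' < k" for p m m'
    using that part_disj by (auto simp: S_def)
  have S_cov: "\<exists>m<k. p \<in> S m" if pn: "p < n" for p
  proof -
    have "x p \<in> X" using pn by (simp add: X_def)
    then obtain m where "m < k" "x p \<in> C m" using part_un by blast
    then show ?thesis using pn by (auto simp: S_def)
  qed
  have S_union: "(\<Union>m\<in>{..<k}. S m) = {..<n}" using S_sub S_cov by blast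
  have S_pd: "\<forall>m\<in>{..<k}. \<forall>m'\<in>{..<k}. m \<noteq> m' \<longrightarrow> S m \<inter> S m' = {}"
    using S_disj by blast
  have sum_split: "(\<Sum>p<n. g p) = (\<Sum>m<k. \<Sum>p\<in>S m. g p)" for g :: "nat \<Rightarrow> real"
  proof -
    have "(\<Sum>p\<in>(\<Union>m\<in>{..<k}. S m). g p) = (\<Sum>m<k. \<Sum>p\<in>S m. g p)"
      by (rule sum.UNION_disjoint) (use S_fin S_pd in auto)
    then show ?thesis unfolding S_union .
  qed
  have cS_pos: "card (S m) > 0" if "m < k" for m
    using S_ne[OF that] S_fin card_gt_0_iff by blast
  have k_le_n: "k \<le> n"
  proof -
    have "card (\<Union>m\<in>{..<k}. S m) = (\<Sum>m<k. card (S m))"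
      by (rule card_UN_disjoint) (use S_fin S_pd in auto)
    then have "n = (\<Sum>m<k. card (S m))" unfolding S_union by simp
    moreover have "(\<Sum>m<k. (1::nat)) \<le> (\<Sum>m<k. card (S m))"
      using cS_pos by (intro sum_mono) (simp add: Suc_leI)
    ultimately show ?thesis by simp
  qed
  have k_pos: "k > 0" using lk by simp
  define e where "e m p = (if p \<in> S m then 1 / sqrt (real (card (S m))) else 0)" for m p
  have e_norm: "(\<Sum>p<n. (e m p)\<^sup>2) = 1" if "m < k" for m
  proof -
    have "(\<Sum>p<n. (e m p)\<^sup>2) = (\<Sum>p<n. if p \<in> S m then 1 / real (card (S m)) else 0)"
      by (intro sum.cong) (auto simp: e_def power_divide)
    also have "\<dots> = (\<Sum>p\<in>S m. 1 / real (card (S m)))" by (rule sum_if_subset[OF S_sub])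
    also have "\<dots> = 1" using cS_pos[OF that] by simp
    finally show ?thesis .
  qed
  define eps where "eps m = Ksig_setdist K \<sigma> (C m) (X - C m)" for m
  have eps_nonneg: "eps m \<ge> 0" for m
  proof (cases "X - C m = {}")
    case True
    have "0 \<le> (INF t\<in>{0..}. K t)"
      by (rule cINF_greatest) (use K_pos in \<open>auto intro: less_imp_le\<close>)
    then show ?thesis using True by (simp add: eps_def Ksig_setdist_def)
  next
    case False
    then show ?thesis using Ksig_pos[of "setdist (C m) (X - C m)"]
      by (simp add: eps_def Ksig_setdist_def)
  qed
  have w_le_eps: "w p q \<le> eps m" if "p \<in> S m" "q < n" "q \<notin> S m" for p q m
  proof -
    have xp: "x p \<in> C m" using that by (simp add: S_def)
    have xq: "x q \<in> X - C m" using that by (simp add: S_def X_def)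
    then have ne: "X - C m \<noteq> {}" by blast
    have "setdist (C m) (X - C m) \<le> dist (x p) (x q)" by (rule setdist_le_dist[OF xp xq])
    then have "Ksig K \<sigma> (dist (x p) (x q)) \<le> Ksig K \<sigma> (setdist (C m) (X - C m))"
      by (intro Ksig_mono) auto
    then show ?thesis using ne by (simp add: w_def affinity_def eps_def Ksig_setdist_def)
  qed
  have Q_e: "Q (e m) \<le> real n * eps m" if "m < k" for m
  proof -
    have pt: "w p q * (e m p - e m q)\<^sup>2 \<le> eps m * (e m p - e m q)\<^sup>2" if "p < n" "q < n" for p q
    proof (cases "p \<in> S m \<longleftrightarrow> q \<in> S m")
      case True
      then have "e m p = e m q" by (auto simp: e_def)
      then show ?thesis by simp
    next
      case False
      then have "w p q \<le> eps m"
        using w_le_eps[of p m q] w_le_eps[of q m p] w_sym that by (cases "p \<in> S m") auto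
      then show ?thesis by (intro mult_right_mono) auto
    qed
    have "Q (e m) = W (e m)" by (rule QW)
    also have "\<dots> \<le> (1/2) * (\<Sum>p<n. \<Sum>q<n. eps m * (e m p - e m q)\<^sup>2)"
      unfolding W_def using pt by (intro mult_left_mono sum_mono) auto
    also have "\<dots> = eps m * ((1/2) * (\<Sum>p<n. \<Sum>q<n. (e m p - e m q)\<^sup>2))"
      by (simp add: sum_distrib_left)
    also have "(\<Sum>p<n. \<Sum>q<n. (e m p - e m q)\<^sup>2) = 2 * real n * 1 - 2 * (\<Sum>p<n. e m p)\<^sup>2"
      using sum_sq_diff[of "{..<n}" "e m"] e_norm[OF that] by simp
    also have "eps m * ((1/2) * (2 * real n * 1 - 2 * (\<Sum>p<n. e m p)\<^sup>2)) \<le> eps m * real n"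
      using eps_nonneg[of m] by (intro mult_left_mono) auto
    finally show ?thesis by (simp add: mult_ac)
  qed
  obtain ms where ms: "ms < k" "\<forall>m<k. eps m \<le> eps ms"
  proof -
    have fin: "finite (eps ` {..<k})" and ne: "eps ` {..<k} \<noteq> {}" using k_pos by auto
    obtain ms where "ms < k" "eps ms = Max (eps ` {..<k})" using Max_in[OF fin ne] by auto
    moreover have "\<forall>m<k. eps m \<le> Max (eps ` {..<k})" using fin by auto
    ultimately show ?thesis using that by auto
  qed
  define c where "c a m = (\<Sum>p<n. U p a * e m p)" for a m
  define s where "s a = (\<Sum>m<k. (c a m)\<^sup>2)" for a
  have sum_s: "(\<Sum>a<n. s a) = real k"
  proof -
    have "(\<Sum>a<n. s a) = (\<Sum>m<k. \<Sum>a<n. (c a m)\<^sup>2)" unfolding s_def by (rule sum.swap)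
    also have "\<dots> = (\<Sum>m<k. (1::real))"
    proof (intro sum.cong refl)
      fix m assume "m \<in> {..<k}"
      then show "(\<Sum>a<n. (c a m)\<^sup>2) = 1"
        unfolding c_def using parseval[OF comp, of "e m"] e_norm by simp
    qed
    finally show ?thesis by simp
  qed
  have s_nonneg: "s a \<ge> 0" for a unfolding s_def by (intro sum_nonneg) auto
  have s_le1: "s a \<le> 1" if an: "a < n" for a
  proof -
    have c_bd: "(c a m)\<^sup>2 \<le> (\<Sum>p\<in>S m. (U p a)\<^sup>2)" if mk: "m < k" for m
    proof -
      have "c a m = (\<Sum>p<n. if p \<in> S m then U p a / sqrt (real (card (S m))) else 0)"
        unfolding c_def by (intro sum.cong) (auto simp: e_def)
      also have "\<dots> = (\<Sum>p\<in>S m. U p a / sqrt (real (card (S m))))" by (rule sum_if_subset[OF S_sub])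
      also have "\<dots> = (\<Sum>p\<in>S m. U p a) / sqrt (real (card (S m)))" by (simp add: sum_divide_distrib)
      finally have "(c a m)\<^sup>2 = (\<Sum>p\<in>S m. U p a)\<^sup>2 / real (card (S m))"
        by (simp add: power_divide)
      also have "\<dots> \<le> real (card (S m)) * (\<Sum>p\<in>S m. (U p a)\<^sup>2) / real (card (S m))"
        by (intro divide_right_mono cs_sum S_fin) simp
      also have "\<dots> = (\<Sum>p\<in>S m. (U p a)\<^sup>2)" using cS_pos[OF mk] by simp
      finally show ?thesis .
    qed
    have "s a \<le> (\<Sum>m<k. \<Sum>p\<in>S m. (U p a)\<^sup>2)" unfolding s_def using c_bd by (intro sum_mono) auto
    also have "\<dots> = (\<Sum>p<n. (U p a)\<^sup>2)" by (rule sum_split[symmetric])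
    also have "\<dots> = 1" using orth an by (simp add: power2_eq_square)
    finally show ?thesis .
  qed
  have total: "(\<Sum>m<k. Q (e m)) = (\<Sum>a<n. lam a * s a)"
  proof -
    have "(\<Sum>m<k. Q (e m)) = (\<Sum>m<k. \<Sum>a<n. lam a * (c a m)\<^sup>2)"
      unfolding Q_spec c_def by simp
    also have "\<dots> = (\<Sum>a<n. \<Sum>m<k. lam a * (c a m)\<^sup>2)" by (rule sum.swap)
    also have "\<dots> = (\<Sum>a<n. lam a * s a)" unfolding s_def by (simp add: sum_distrib_left)
    finally show ?thesis .
  qed
  have total_bd: "(\<Sum>m<k. Q (e m)) \<le> real k * real n * eps ms"
  proof -
    have "(\<Sum>m<k. Q (e m)) \<le> (\<Sum>m<k. real n * eps ms)"
      using Q_e ms(2) by (intro sum_mono) (meson lessThan_iff mult_left_mono of_nat_0_le_iff order_trans)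
    then show ?thesis by simp
  qed
  have k1n: "k - 1 < n" using k_le_n k_pos by simp
  have lam_k1: "lam (k - 1) \<le> (\<Sum>a<n. lam a * s a)"
  proof -
    have pt: "lam (k - 1) * (s a - (if a \<in> {..<k-1} then 1 else 0)) \<le> lam a * s a" if an: "a < n" for a
    proof (cases "a < k - 1")
      case True
      have "lam (k - 1) * (s a - 1) \<le> 0"
        using lam_nonneg[OF k1n] s_le1[OF an] by (simp add: mult_nonneg_nonpos)
      also have "0 \<le> lam a * s a" using lam_nonneg[OF an] s_nonneg by simp
      finally show ?thesis using True by simp
    next
      case False
      then have "lam (k - 1) \<le> lam a" using lam_mono an by simp
      then show ?thesis using False s_nonneg by (simp add: mult_right_mono)
    qed
    have "(\<Sum>a<n. lam (k - 1) * (s a - (if a \<in> {..<k-1} then 1 else 0)))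
        = lam (k - 1) * (real k - (\<Sum>a<n. (if a \<in> {..<k-1} then 1 else 0)))"
      by (simp add: sum_distrib_left[symmetric] sum_subtractf sum_s)
    also have "(\<Sum>a<n. (if a \<in> {..<k-1} then 1 else 0)) = (\<Sum>a\<in>{..<k-1}. (1::real))"
      by (rule sum_if_subset) (use k1n in auto)
    also have "lam (k - 1) * (real k - (\<Sum>a\<in>{..<k-1}. (1::real))) = lam (k - 1)"
      using k_pos by (simp add: of_nat_diff)
    finally have "lam (k - 1) = (\<Sum>a<n. lam (k - 1) * (s a - (if a \<in> {..<k-1} then 1 else 0)))" by simp
    also have "\<dots> \<le> (\<Sum>a<n. lam a * s a)" using pt by (intro sum_mono) auto
    finally show ?thesis .
  qed
  have lam_bd: "lam a \<le> real k * real n * eps ms" if ak: "a < k" for a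
  proof -
    have "lam a \<le> lam (k - 1)" using lam_mono ak k1n by simp
    then show ?thesis using lam_k1 total total_bd by linarith
  qed
  define Kd where "Kd = Ksig K \<sigma> (\<delta> l)"
  have dl: "\<delta> l \<ge> 0" using delta_nonneg lk by simp
  have Kd_pos: "Kd > 0" unfolding Kd_def by (rule Ksig_pos[OF dl])
  have iS: "i \<in> S l" using ij mem by (simp add: S_def)
  have jS: "j \<in> S l" using ij mem by (simp add: S_def)
  have connS: "\<forall>A. i \<in> A \<longrightarrow> A \<subseteq> S l \<longrightarrow> A \<noteq> S l \<longrightarrow>
      (\<exists>p\<in>A. \<exists>q\<in>S l - A. dist (x p) (x q) \<le> \<delta> l)"
  proof (intro allI impI)
    fix A assume iA: "i \<in> A" and AS: "A \<subseteq> S l" and AneS: "A \<noteq> S l"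
    have Cl_sub: "C l \<subseteq> X" using part_un lk by blast
    have An: "A \<subseteq> {..<n}" using AS S_sub by blast
    define C1 where "C1 = x ` A"
    define C2 where "C2 = C l - x ` A"
    have C1ne: "C1 \<noteq> {}" using iA by (auto simp: C1_def)
    obtain q0 where q0: "q0 \<in> S l" "q0 \<notin> A" using AS AneS by blast
    have "x q0 \<notin> x ` A"
    proof
      assume "x q0 \<in> x ` A"
      then obtain p where "p \<in> A" "x q0 = x p" by auto
      then have "q0 = p" using distinct_pts An q0 S_sub by (meson inj_onD subsetD)
      then show False using q0 \<open>p \<in> A\<close> by simp
    qed
    then have C2ne: "C2 \<noteq> {}" using q0 by (auto simp: C2_def S_def)
    have C1sub: "C1 \<subseteq> C l" using AS by (auto simp: C1_def S_def)
    have un: "C1 \<union> C2 = C l" using C1sub by (auto simp: C2_def C1_def)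
    have dj: "C1 \<inter> C2 = {}" by (auto simp: C1_def C2_def)
    have "\<not> setdist C1 C2 > \<delta> l"
      using conn lk C1ne C2ne un dj unfolding connected_at_dist_def by blast
    then have sd: "setdist C1 C2 \<le> \<delta> l" by simp
    have finX: "finite X" by (simp add: X_def)
    have "C1 \<subseteq> X" using C1sub Cl_sub by (rule order_trans)
    then have fC1: "finite C1" using finX finite_subset by blast
    have "C2 \<subseteq> C l" by (auto simp: C2_def)
    then have "C2 \<subseteq> X" using Cl_sub by (rule order_trans)
    then have fC2: "finite C2" using finX finite_subset by blast
    obtain a b where ab: "a \<in> C1" "b \<in> C2" "dist a b = setdist C1 C2"
      using setdist_compact_closed[OF finite_imp_compact[OF fC1] finite_imp_closed[OF fC2] C1ne C2ne]
      by blast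
    obtain p where p: "p \<in> A" "a = x p" using ab by (auto simp: C1_def)
    have "b \<in> X" using ab Cl_sub by (auto simp: C2_def)
    then obtain q where q: "q < n" "b = x q" by (auto simp: X_def)
    have qS: "q \<in> S l" using q ab by (auto simp: S_def C2_def)
    have qA: "q \<notin> A" using q ab by (auto simp: C2_def)
    have dpq: "dist (x p) (x q) \<le> \<delta> l" using ab(3) p(2) q(2) sd by simp
    show "\<exists>p\<in>A. \<exists>q\<in>S l - A. dist (x p) (x q) \<le> \<delta> l"
      using p(1) qS qA dpq by blast
  qed
  obtain E where E_fin: "finite E" and E_card: "card E < card (S l)"
    and E_sub: "E \<subseteq> {(p,q). p \<in> S l \<and> q \<in> S l \<and> dist (x p) (x q) \<le> \<delta> l}"
    and E_swap: "\<forall>e\<in>E. prod.swap e \<notin> E"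
    and E_bnd: "\<forall>f::nat\<Rightarrow>real. \<forall>q\<in>S l. \<bar>f q - f i\<bar> \<le> (\<Sum>e\<in>E. \<bar>f (fst e) - f (snd e)\<bar>)"
    using tree[OF S_fin iS connS] by blast
  have cardE: "card E \<le> n"
  proof -
    have "card (S l) \<le> card {..<n}" by (rule card_mono[OF _ S_sub]) simp
    then show ?thesis using E_card by simp
  qed
  have E_n: "E \<subseteq> {..<n} \<times> {..<n}" using E_sub S_sub by blast
  have comp_bd: "Kd * (U i a - U j a)\<^sup>2 \<le> real n * lam a" if ak: "a < k" for a
  proof -
    have an: "a < n" using ak k_le_n by simp
    define f where "f p = U p a" for p
    define g where "g pq = w (fst pq) (snd pq) * (f (fst pq) - f (snd pq))\<^sup>2" for pq
    have g_sym: "g (prod.swap pq) = g pq" for pq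
      unfolding g_def using w_sym by (cases pq) (simp add: power2_commute)
    have g_nonneg: "g pq \<ge> 0" for pq unfolding g_def using w_pos by (simp add: less_imp_le)
    have "\<bar>f j - f i\<bar> \<le> (\<Sum>e\<in>E. \<bar>f (fst e) - f (snd e)\<bar>)" using E_bnd jS by blast
    then have "(f j - f i)\<^sup>2 \<le> (\<Sum>e\<in>E. \<bar>f (fst e) - f (snd e)\<bar>)\<^sup>2"
      by (metis abs_ge_zero power2_abs power_mono)
    also have "\<dots> \<le> real (card E) * (\<Sum>e\<in>E. \<bar>f (fst e) - f (snd e)\<bar>\<^sup>2)"
      by (rule cs_sum[OF E_fin])
    finally have st1: "(f j - f i)\<^sup>2 \<le> real (card E) * (\<Sum>e\<in>E. (f (fst e) - f (snd e))\<^sup>2)"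
      by simp
    have st2: "Kd * (\<Sum>e\<in>E. (f (fst e) - f (snd e))\<^sup>2) \<le> (\<Sum>e\<in>E. g e)"
    proof -
      have "Kd * (f (fst e) - f (snd e))\<^sup>2 \<le> g e" if eE: "e \<in> E" for e
      proof -
        have "dist (x (fst e)) (x (snd e)) \<le> \<delta> l" using E_sub eE by auto
        then have "Kd \<le> w (fst e) (snd e)" unfolding Kd_def w_def affinity_def
          by (intro Ksig_mono) auto
        then show ?thesis unfolding g_def by (intro mult_right_mono) auto
      qed
      then show ?thesis by (simp add: sum_distrib_left sum_mono)
    qed
    have st3: "2 * (\<Sum>e\<in>E. g e) \<le> 2 * lam a"
    proof -
      have inj: "inj_on prod.swap E" by (rule inj_swap)
      have sw: "(\<Sum>e\<in>prod.swap ` E. g e) = (\<Sum>e\<in>E. g e)"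
        using sum.reindex[OF inj, of g] g_sym by (simp add: comp_def)
      have dj: "E \<inter> prod.swap ` E = {}" using E_swap by force
      have "2 * (\<Sum>e\<in>E. g e) = (\<Sum>e\<in>E \<union> prod.swap ` E. g e)"
        using sum.union_disjoint[OF E_fin finite_imageI[OF E_fin] dj, of g] sw by simp
      also have "\<dots> \<le> (\<Sum>e\<in>{..<n} \<times> {..<n}. g e)"
        by (rule sum_mono2) (use E_n g_nonneg in auto)
      also have "\<dots> = (\<Sum>p<n. \<Sum>q<n. w p q * (f p - f q)\<^sup>2)"
        by (simp add: sum.cartesian_product g_def split_beta)
      also have "\<dots> = 2 * W f" by (simp add: W_def)
      also have "W f = lam a" using lam_Q[OF an] QW by (simp add: f_def[abs_def])
      finally show ?thesis by simp
    qed
    have "Kd * (f j - f i)\<^sup>2 \<le> Kd * (real (card E) * (\<Sum>e\<in>E. (f (fst e) - f (snd e))\<^sup>2))"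
      using st1 Kd_pos by (simp add: mult_left_mono)
    also have "\<dots> = real (card E) * (Kd * (\<Sum>e\<in>E. (f (fst e) - f (snd e))\<^sup>2))" by simp
    also have "\<dots> \<le> real (card E) * lam a" using st2 st3 by (intro mult_left_mono) auto
    also have "\<dots> \<le> real n * lam a" using cardE lam_nonneg[OF an] by (intro mult_right_mono) auto
    finally show ?thesis by (simp add: f_def power2_commute)
  qed
  define B where "B = real n ^ 3 * real k * eps ms / Kd"
  have rd2: "(\<Sum>a<k. (U i a - U j a)\<^sup>2) \<le> B"
  proof -
    have "(U i a - U j a)\<^sup>2 \<le> real n * (real k * real n * eps ms) / Kd" if ak: "a < k" for a
    proof -
      have "Kd * (U i a - U j a)\<^sup>2 \<le> real n * (real k * real n * eps ms)"
        using comp_bd[OF ak] lam_bd[OF ak] by (meson mult_left_mono of_nat_0_le_iff order_trans)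
      then show ?thesis using Kd_pos by (simp add: field_simps)
    qed
    then have "(\<Sum>a<k. (U i a - U j a)\<^sup>2) \<le> (\<Sum>a<k. real n * (real k * real n * eps ms) / Kd)"
      by (intro sum_mono) auto
    also have "\<dots> = real k * real k * real n * real n * eps ms / Kd" by simp
    also have "\<dots> \<le> B" unfolding B_def
    proof (intro divide_right_mono)
      have "real k * real k * real n * real n * eps ms \<le> real n * real k * real n * real n * eps ms"
        using k_le_n eps_nonneg[of ms] by (intro mult_right_mono) auto
      then show "real k * real k * real n * real n * eps ms \<le> real n ^ 3 * real k * eps ms"
        by (simp add: power3_eq_cube mult_ac)
    qed (use Kd_pos in auto)
    finally show ?thesis .
  qed
  have term_eq: "real n powr 1.5 * real k powr 0.5 * sqrt (eps ms / Kd) = sqrt B"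
  proof -
    have "sqrt B = sqrt (real n ^ 3 * real k * (eps ms / Kd))" unfolding B_def by simp
    also have "\<dots> = sqrt (real n ^ 3) * sqrt (real k) * sqrt (eps ms / Kd)"
      by (simp only: real_sqrt_mult)
    finally show ?thesis using pow15[of "real n"] pow05[of "real k"] by simp
  qed
  have "row_dist U k i j \<le> sqrt B" unfolding row_dist_def using rd2 by simp
  also have "sqrt B = real n powr 1.5 * real k powr 0.5 *
              sqrt (Ksig_setdist K \<sigma> (C ms) (x ` {..<n} - C ms) / Ksig K \<sigma> (\<delta> l))"
    using term_eq by (simp add: eps_def X_def Kd_def)
  also have "\<dots> \<le> Max ((\<lambda>m. real n powr 1.5 * real k powr 0.5 *
              sqrt (Ksig_setdist K \<sigma> (C m) (x ` {..<n} - C m) / Ksig K \<sigma> (\<delta> l))) ` {..<k})"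
    using ms(1) by (intro Max_ge) auto
  finally show ?thesis .
qed

end
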